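(* Let $A$ be a Noetherian ring, $\mathcal{R}$ a standard graded ring with $\mathcal{R}_0=A$, $X\in\operatorname{^*Mod}_f(\mathcal{R})$, and set $Y=X/H^0_{\mathcal{R}_+}(X)$. Then $\operatorname{Ass}_A X=\operatorname{Ass}_A Y\cup\operatorname{Ass}_A H^0_{\mathcal{R}_+}(X)$. Moreover, if $P\in\operatorname{Ass}_A Y_s$ for some $s$, then $P\in\operatorname{Ass}_A X_{s+r}$ for some $r\ge1$.
   Context: A standard graded ring $\mathcal{R}=\bigoplus_{n\ge0}\mathcal{R}_n$ with $\mathcal{R}_0=A$ is a Noetherian $\mathbb{N}$-graded commutative ring generated as an $A$-algebra by finitely many elements of $\mathcal{R}_1$; $\mathcal{R}_+=\bigoplus_{n\ge1}\mathcal{R}_n$. $\operatorname{^*Mod}_f(\mathcal{R})$ is the full subcategory of graded $\mathcal{R}$-modules $X=\bigoplus_{n\in\mathbb{Z}}X_n$ with every $X_n$ a finitely generated $A$-module and $X_n=0$ for $n\ll0$. $H^0_{\mathcal{R}_+}(X)=\{x\in X:\mathcal{R}_+^k x=0\text{ for some }k\}$. For a graded module $X$, $\operatorname{Ass}_A X$ denotes the associated primes of $X$ regarded as an $A$-module (equivalently $\bigcup_n\operatorname{Ass}_A X_n$). *)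

theory Defs
  imports Complex_Main
begin

definition ideal_in :: "'a::comm_ring_1 set \<Rightarrow> 'a set \<Rightarrow> bool" where
  "ideal_in S I \<longleftrightarrow> I \<subseteq> S \<and> 0 \<in> I \<and> (\<forall>x\<in>I. \<forall>y\<in>I. x + y \<in> I) \<and> (\<forall>x\<in>I. - x \<in> I)
     \<and> (\<forall>s\<in>S. \<forall>x\<in>I. s * x \<in> I)"

definition prime_ideal_in :: "'a::comm_ring_1 set \<Rightarrow> 'a set \<Rightarrow> bool" where
  "prime_ideal_in S P \<longleftrightarrow> ideal_in S P \<and> P \<noteq> S
     \<and> (\<forall>a\<in>S. \<forall>b\<in>S. a * b \<in> P \<longrightarrow> a \<in> P \<or> b \<in> P)"

definition lin_comb :: "'a::comm_ring_1 set \<Rightarrow> 'a set \<Rightarrow> 'a set" where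
  "lin_comb S F = {\<Sum>f\<in>F. c f * f | c. \<forall>f\<in>F. c f \<in> S}"

definition noetherian_in :: "'a::comm_ring_1 set \<Rightarrow> bool" where
  "noetherian_in S \<longleftrightarrow> (\<forall>I. ideal_in S I \<longrightarrow> (\<exists>F. finite F \<and> F \<subseteq> I \<and> I = lin_comb S F))"

definition ideal_gen :: "'a::comm_ring_1 set \<Rightarrow> 'a set" where
  "ideal_gen T = {\<Sum>t\<in>F. c t * t | F c. finite F \<and> F \<subseteq> T}"

definition ideal_prod :: "'a::comm_ring_1 set \<Rightarrow> 'a set \<Rightarrow> 'a set" where
  "ideal_prod I J = ideal_gen {i * j | i j. i \<in> I \<and> j \<in> J}"

fun ideal_pow :: "'a::comm_ring_1 set \<Rightarrow> nat \<Rightarrow> 'a set" where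
  "ideal_pow I 0 = UNIV"
| "ideal_pow I (Suc k) = ideal_prod I (ideal_pow I k)"

text \<open>Associated primes over the subring A of the quotient module M/N, where N is a submodule
  and M a subset of the ambient module (elements of M represent the classes in (M+N)/N).
  Ass_A M (with M a submodule) is \<open>ass_quot smult A M {0}\<close>.\<close>
definition ass_quot :: "('a::comm_ring_1 \<Rightarrow> 'm::ab_group_add \<Rightarrow> 'm) \<Rightarrow> 'a set \<Rightarrow> 'm set \<Rightarrow> 'm set \<Rightarrow> 'a set set" where
  "ass_quot smult A M N = {P. prime_ideal_in A P \<and> (\<exists>x\<in>M. P = {a\<in>A. smult a x \<in> N})}"

inductive_set alg_gen :: "'a::comm_ring_1 set \<Rightarrow> 'a set \<Rightarrow> 'a set" for A S where
  base: "a \<in> A \<Longrightarrow> a \<in> alg_gen A S"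
| gen: "s \<in> S \<Longrightarrow> s \<in> alg_gen A S"
| add: "x \<in> alg_gen A S \<Longrightarrow> y \<in> alg_gen A S \<Longrightarrow> x + y \<in> alg_gen A S"
| neg: "x \<in> alg_gen A S \<Longrightarrow> - x \<in> alg_gen A S"
| mult: "x \<in> alg_gen A S \<Longrightarrow> y \<in> alg_gen A S \<Longrightarrow> x * y \<in> alg_gen A S"

definition add_subgroup :: "'b::ab_group_add set \<Rightarrow> bool" where
  "add_subgroup H \<longleftrightarrow> 0 \<in> H \<and> (\<forall>x\<in>H. \<forall>y\<in>H. x + y \<in> H) \<and> (\<forall>x\<in>H. - x \<in> H)"

definition direct_sum_decomp :: "('i \<Rightarrow> 'b::ab_group_add set) \<Rightarrow> bool" where
  "direct_sum_decomp D \<longleftrightarrow>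
     (\<forall>x. \<exists>F c. finite F \<and> (\<forall>n\<in>F. c n \<in> D n) \<and> x = (\<Sum>n\<in>F. c n))
   \<and> (\<forall>F c. finite F \<and> (\<forall>n\<in>F. c n \<in> D n) \<and> (\<Sum>n\<in>F. c n) = 0 \<longrightarrow> (\<forall>n\<in>F. c n = 0))"

definition graded_ring :: "(nat \<Rightarrow> 'a::comm_ring_1 set) \<Rightarrow> bool" where
  "graded_ring G \<longleftrightarrow> (\<forall>n. add_subgroup (G n)) \<and> 1 \<in> G 0
     \<and> (\<forall>m n. \<forall>x\<in>G m. \<forall>y\<in>G n. x * y \<in> G (m + n)) \<and> direct_sum_decomp G"

definition standard_graded :: "(nat \<Rightarrow> 'a::comm_ring_1 set) \<Rightarrow> bool" where
  "standard_graded G \<longleftrightarrow> graded_ring G \<and> noetherian_in (UNIV :: 'a set)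
     \<and> (\<exists>S. finite S \<and> S \<subseteq> G 1 \<and> alg_gen (G 0) S = UNIV)"

definition irrelevant_ideal :: "(nat \<Rightarrow> 'a::comm_ring_1 set) \<Rightarrow> 'a set" where
  "irrelevant_ideal G = ideal_gen (\<Union>n\<in>{1..}. G n)"

definition fin_gen_over :: "('a::comm_ring_1 \<Rightarrow> 'm::ab_group_add \<Rightarrow> 'm) \<Rightarrow> 'a set \<Rightarrow> 'm set \<Rightarrow> bool" where
  "fin_gen_over smult A M \<longleftrightarrow>
     (\<exists>F. finite F \<and> F \<subseteq> M \<and> M = {\<Sum>f\<in>F. smult (c f) f | c. \<forall>f\<in>F. c f \<in> A})"

definition graded_module :: "(nat \<Rightarrow> 'a::comm_ring_1 set) \<Rightarrow> ('a \<Rightarrow> 'm::ab_group_add \<Rightarrow> 'm)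
     \<Rightarrow> (int \<Rightarrow> 'm set) \<Rightarrow> bool" where
  "graded_module G smult X \<longleftrightarrow> module smult \<and> (\<forall>n. add_subgroup (X n))
     \<and> (\<forall>m n. \<forall>r\<in>G m. \<forall>x\<in>X n. smult r x \<in> X (int m + n)) \<and> direct_sum_decomp X"

definition in_starMod_f :: "(nat \<Rightarrow> 'a::comm_ring_1 set) \<Rightarrow> ('a \<Rightarrow> 'm::ab_group_add \<Rightarrow> 'm)
     \<Rightarrow> (int \<Rightarrow> 'm set) \<Rightarrow> bool" where
  "in_starMod_f G smult X \<longleftrightarrow> graded_module G smult X
     \<and> (\<forall>n. fin_gen_over smult (G 0) (X n)) \<and> (\<exists>n0. \<forall>n<n0. X n = {0})"

definition H0 :: "(nat \<Rightarrow> 'a::comm_ring_1 set) \<Rightarrow> ('a \<Rightarrow> 'm::ab_group_add \<Rightarrow> 'm) \<Rightarrow> 'm set" where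
  "H0 G smult = {x. \<exists>k. \<forall>r\<in>ideal_pow (irrelevant_ideal G) k. smult r x = 0}"

end

theory Submission imports Defs begin

definition idl :: "'a::comm_ring_1 set \<Rightarrow> bool" where
  "idl J \<longleftrightarrow> 0 \<in> J \<and> (\<forall>x\<in>J. \<forall>y\<in>J. x + y \<in> J) \<and> (\<forall>r. \<forall>x\<in>J. r * x \<in> J)"

lemma idl_sum: assumes "idl J" "finite F" "\<And>x. x \<in> F \<Longrightarrow> f x \<in> J" shows "sum f F \<in> J"
  using assms(2,3) by (induction F rule: finite_induct) (use assms(1) in \<open>auto simp: idl_def\<close>)

lemma ideal_gen_idl: "idl (ideal_gen T)"
  unfolding idl_def
proof (intro conjI ballI allI)
  show "0 \<in> ideal_gen T" unfolding ideal_gen_def mem_Collect_eq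
    by (intro exI[of _ "{}"] exI[of _ "\<lambda>_. 0"]) simp
next
  fix x y assume "x \<in> ideal_gen T" "y \<in> ideal_gen T"
  then obtain F1 c1 F2 c2 where 1: "finite F1" "F1 \<subseteq> T" "x = (\<Sum>t\<in>F1. c1 t * t)"
     and 2: "finite F2" "F2 \<subseteq> T" "y = (\<Sum>t\<in>F2. c2 t * t)" unfolding ideal_gen_def by blast
  define c where "c t = (if t \<in> F1 then c1 t else 0) + (if t \<in> F2 then c2 t else 0)" for t
  have "(\<Sum>t\<in>F1 \<union> F2. c t * t) = (\<Sum>t\<in>F1 \<union> F2. (if t \<in> F1 then c1 t * t else 0)) + (\<Sum>t\<in>F1 \<union> F2. (if t \<in> F2 then c2 t * t else 0))"
    by (subst sum.distrib[symmetric]) (rule sum.cong; simp add: c_def distrib_right)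
  also have "\<dots> = x + y" using 1 2
    by (simp add: sum.If_cases Int_absorb1 Int_absorb2 )
  finally show "x + y \<in> ideal_gen T" unfolding ideal_gen_def using 1 2
    by (intro CollectI exI[of _ "F1 \<union> F2"] exI[of _ c]) auto
next
  fix r x assume "x \<in> ideal_gen T"
  then obtain F c where 1: "finite F" "F \<subseteq> T" "x = (\<Sum>t\<in>F. c t * t)" unfolding ideal_gen_def by blast
  have "r * x = (\<Sum>t\<in>F. (r * c t) * t)" using 1 by (simp add: sum_distrib_left mult.assoc)
  then show "r * x \<in> ideal_gen T" unfolding ideal_gen_def using 1
    by (intro CollectI exI[of _ F] exI[of _ "\<lambda>t. r * c t"]) auto
qed

lemma ideal_gen_base: assumes "t \<in> T" shows "t \<in> ideal_gen T"
proof -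
  show ?thesis unfolding ideal_gen_def mem_Collect_eq using assms
    by (intro exI[of _ "{t}"] exI[of _ "\<lambda>_. 1"]) simp
qed

lemma ideal_gen_least: "idl J \<Longrightarrow> T \<subseteq> J \<Longrightarrow> ideal_gen T \<subseteq> J"
proof
  fix x assume "idl J" "T \<subseteq> J" "x \<in> ideal_gen T"
  then obtain F c where 1: "finite F" "F \<subseteq> T" "x = (\<Sum>t\<in>F. c t * t)" unfolding ideal_gen_def by blast
  show "x \<in> J" unfolding 1(3) using 1 \<open>idl J\<close> \<open>T \<subseteq> J\<close>
    by (intro idl_sum) (auto simp: idl_def)
qed

lemma ideal_gen_mono: "T \<subseteq> T' \<Longrightarrow> ideal_gen T \<subseteq> ideal_gen T'"
  using ideal_gen_least[OF ideal_gen_idl] ideal_gen_base by blast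

lemma idl_UNIV: "idl UNIV" by (simp add: idl_def)

lemma ideal_pow_idl: "idl (ideal_pow I k)"
  by (cases k) (auto simp: idl_UNIV ideal_prod_def ideal_gen_idl)

lemma ideal_pow_Suc_sub: "ideal_pow I (Suc k) \<subseteq> ideal_pow I k"
proof -
  have "ideal_prod I (ideal_pow I k) \<subseteq> ideal_pow I k"
    unfolding ideal_prod_def using ideal_pow_idl[of I k]
    by (intro ideal_gen_least) (auto simp: idl_def)
  then show ?thesis by simp
qed

lemma ideal_pow_anti: "k \<le> K \<Longrightarrow> ideal_pow I K \<subseteq> ideal_pow I k"
proof (induction K rule: dec_induct)
  case (step n) then show ?case using ideal_pow_Suc_sub[of I n] by blast
qed simp

lemma prod_list_pow: "set ts \<subseteq> I \<Longrightarrow> prod_list ts \<in> ideal_pow I (length ts)"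
proof (induction ts)
  case (Cons t ts) then show ?case
    by (auto simp: ideal_prod_def intro!: ideal_gen_base)
qed simp

lemma ideal_gen_mult: "x \<in> ideal_gen T \<Longrightarrow> r * x \<in> ideal_gen T"
  using ideal_gen_idl[of T] by (simp add: idl_def)

lemma ideal_prod_gen: "ideal_prod (ideal_gen A) (ideal_gen B) \<subseteq> ideal_gen {a * b | a b. a \<in> A \<and> b \<in> B}"
  unfolding ideal_prod_def
proof (intro ideal_gen_least[OF ideal_gen_idl], safe)
  let ?C = "ideal_gen {a * b | a b. a \<in> A \<and> b \<in> B}"
  fix i j assume "i \<in> ideal_gen A" "j \<in> ideal_gen B"
  then obtain F c G d where 1: "finite F" "F \<subseteq> A" "i = (\<Sum>t\<in>F. c t * t)"
     and 2: "finite G" "G \<subseteq> B" "j = (\<Sum>t\<in>G. d t * t)" unfolding ideal_gen_def by blast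
  have "i * j = (\<Sum>t\<in>F. \<Sum>u\<in>G. (c t * d u) * (t * u))"
    unfolding 1(3) 2(3) sum_product by (simp add: mult_ac)
  also have "\<dots> \<in> ?C" using 1 2
    by (intro idl_sum[OF ideal_gen_idl] 1 ideal_gen_mult ideal_gen_base) blast+
  finally show "i * j \<in> ?C" .
qed

lemma ideal_prod_mono: "J \<subseteq> J' \<Longrightarrow> ideal_prod I J \<subseteq> ideal_prod I J'"
  unfolding ideal_prod_def by (rule ideal_gen_mono) blast

lemma pow_gen: "ideal_pow (ideal_gen T) k \<subseteq> ideal_gen (prod_list ` {ts. set ts \<subseteq> T \<and> length ts = k})"
proof (induction k)
  case 0
  have "r \<in> ideal_gen (prod_list ` {ts. set ts \<subseteq> T \<and> length ts = 0})" for r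
  proof -
    have "1 \<in> ideal_gen (prod_list ` {ts. set ts \<subseteq> T \<and> length ts = 0})"
      by (rule ideal_gen_base) (rule image_eqI[of _ _ "[]"], auto)
    from ideal_gen_idl[unfolded idl_def, THEN conjunct2, THEN conjunct2, rule_format, OF this, of r]
    show ?thesis by simp
  qed
  then show ?case by auto
next
  case (Suc k)
  have "ideal_pow (ideal_gen T) (Suc k) \<subseteq> ideal_prod (ideal_gen T) (ideal_gen (prod_list ` {ts. set ts \<subseteq> T \<and> length ts = k}))"
    using ideal_prod_mono[OF Suc.IH] by simp
  also have "\<dots> \<subseteq> ideal_gen {a * b | a b. a \<in> T \<and> b \<in> prod_list ` {ts. set ts \<subseteq> T \<and> length ts = k}}"
    by (rule ideal_prod_gen)
  also have "\<dots> \<subseteq> ideal_gen (prod_list ` {ts. set ts \<subseteq> T \<and> length ts = Suc k})"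
  proof (rule ideal_gen_mono, rule subsetI)
    fix x assume "x \<in> {a * b | a b. a \<in> T \<and> b \<in> prod_list ` {ts. set ts \<subseteq> T \<and> length ts = k}}"
    then obtain a ts where "a \<in> T" "set ts \<subseteq> T" "length ts = k" "x = a * prod_list ts" by blast
    then show "x \<in> prod_list ` {ts. set ts \<subseteq> T \<and> length ts = Suc k}"
      by (intro image_eqI[of _ _ "a # ts"]) auto
  qed
  finally show ?case .
qed

lemma prime_inter:
  fixes A P :: "'a::comm_ring_1 set"
  assumes pr: "prime_ideal_in A P" and fin: "finite Ms"
    and I: "\<And>i. i \<in> Ms \<Longrightarrow> I i \<subseteq> A \<and> (\<forall>s\<in>A. \<forall>x\<in>I i. s * x \<in> I i)"
    and Peq: "P = {a\<in>A. \<forall>i\<in>Ms. a \<in> I i}"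
    and A1: "1 \<in> A" and AM: "\<And>x y. x \<in> A \<Longrightarrow> y \<in> A \<Longrightarrow> x * y \<in> A"
  shows "\<exists>i\<in>Ms. P = I i"
proof (rule ccontr)
  assume "\<not> ?thesis"
  then have "\<forall>i\<in>Ms. \<exists>a. a \<in> I i \<and> a \<notin> P" using Peq by blast
  then obtain f where f: "\<And>i. i \<in> Ms \<Longrightarrow> f i \<in> I i \<and> f i \<notin> P" by metis
  have PA: "P \<subseteq> A" and Pne: "P \<noteq> A" and prm: "\<forall>a\<in>A. \<forall>b\<in>A. a * b \<in> P \<longrightarrow> a \<in> P \<or> b \<in> P"
    and Pabs: "\<forall>s\<in>A. \<forall>x\<in>P. s * x \<in> P"
    using pr unfolding prime_ideal_in_def ideal_in_def by auto
  have 1: "1 \<notin> P"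
  proof
    assume "1 \<in> P"
    then have "A \<subseteq> P" using Pabs by (metis mult.right_neutral subsetI)
    then show False using PA Pne by blast
  qed
  have gen: "M \<subseteq> Ms \<Longrightarrow> prod f M \<in> A \<and> prod f M \<notin> P" for M
  proof (induction M rule: infinite_finite_induct)
    case (infinite M) then show ?case using A1 1 by simp
  next
    case empty then show ?case using A1 1 by simp
  next
    case (insert i M)
    then have fi: "f i \<in> A" "f i \<notin> P" using f I by auto
    then show ?case using insert prm AM by auto
  qed
  obtain i where "i \<in> Ms"
    using Peq Pne by (cases "Ms = {}") auto
  have "prod f Ms \<in> I j" if "j \<in> Ms" for j
  proof -
    have "prod f Ms = prod f (Ms - {j}) * f j"
      using prod.remove[OF fin that, of f] by (simp add: mult.commute)
    then show ?thesis using gen[of "Ms - {j}"] I[OF that] f[OF that] by auto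
  qed
  then have "prod f Ms \<in> P" using Peq gen[of Ms] by auto
  then show False using gen[of Ms] by auto
qed

lemma fin_gen_ideal:
  fixes U :: "'a::comm_ring_1 set"
  assumes "noetherian_in (UNIV :: 'a set)"
  shows "\<exists>T0. finite T0 \<and> T0 \<subseteq> U \<and> ideal_gen U = ideal_gen T0"
proof -
  have "ideal_in UNIV (ideal_gen U)"
    using ideal_gen_idl[of U] unfolding ideal_in_def idl_def
    by (metis UNIV_I mult_minus1 subset_UNIV)
  then obtain F where F: "finite F" "F \<subseteq> ideal_gen U" "ideal_gen U = lin_comb UNIV F"
    using assms unfolding noetherian_in_def by blast
  have "\<forall>f\<in>F. \<exists>Ff. finite Ff \<and> Ff \<subseteq> U \<and> f \<in> ideal_gen Ff"
  proof
    fix f assume "f \<in> F"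
    then have "f \<in> ideal_gen U" using F by blast
    then obtain F' c where 1: "finite F'" "F' \<subseteq> U" "f = (\<Sum>t\<in>F'. c t * t)"
      unfolding ideal_gen_def by blast
    have "f \<in> ideal_gen F'" unfolding ideal_gen_def using 1
      by (intro CollectI exI[of _ F'] exI[of _ c]) auto
    then show "\<exists>Ff. finite Ff \<and> Ff \<subseteq> U \<and> f \<in> ideal_gen Ff" using 1 by blast
  qed
  then obtain Ff where Ff: "\<And>f. f \<in> F \<Longrightarrow> finite (Ff f) \<and> Ff f \<subseteq> U \<and> f \<in> ideal_gen (Ff f)" by metis
  define T0 where "T0 = (\<Union>f\<in>F. Ff f)"
  have T0: "finite T0" "T0 \<subseteq> U" using Ff F unfolding T0_def by auto
  have "ideal_gen U \<subseteq> ideal_gen T0"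
  proof
    fix x assume "x \<in> ideal_gen U"
    then obtain c where x: "x = (\<Sum>f\<in>F. c f * f)" using F unfolding lin_comb_def by blast
    have "f \<in> ideal_gen T0" if "f \<in> F" for f
      using Ff[OF that] ideal_gen_mono[of "Ff f" T0] that unfolding T0_def by blast
    then show "x \<in> ideal_gen T0" unfolding x
      by (intro idl_sum[OF ideal_gen_idl] F ideal_gen_mult)
  qed
  moreover have "ideal_gen T0 \<subseteq> ideal_gen U" using T0 ideal_gen_mono by blast
  ultimately show ?thesis using T0 by blast
qed

context module
begin

lemma kill_gen: assumes "\<And>m. m \<in> M \<Longrightarrow> scale m v = 0" "r \<in> ideal_gen M" shows "scale r v = 0"
proof -
  obtain F c where 1: "finite F" "F \<subseteq> M" "r = (\<Sum>t\<in>F. c t * t)" using assms(2) unfolding ideal_gen_def by blast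
  have "scale r v = (\<Sum>t\<in>F. scale (c t) (scale t v))" unfolding 1(3) scale_sum_left by simp
  also have "\<dots> = 0" using 1 assms(1) by (intro sum.neutral) (auto simp del: scale_scale)
  finally show ?thesis .
qed

lemma zero_H0: "0 \<in> H0 G scale" unfolding H0_def by auto

lemma key:
  assumes A1: "1 \<in> A" and AM: "\<And>x y. x \<in> A \<Longrightarrow> y \<in> A \<Longrightarrow> x * y \<in> A"
    and noeth: "noetherian_in A" and RT: "irrelevant_ideal G = ideal_gen T0" and finT: "finite T0"
    and pr: "prime_ideal_in A P" and Py: "P = {a\<in>A. scale a y \<in> H0 G scale}"
  shows "\<exists>ts. set ts \<subseteq> T0 \<and> length ts \<ge> 1 \<and> P = {a\<in>A. scale a (scale (prod_list ts) y) = 0}"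
proof -
  let ?R = "irrelevant_ideal G"
  have idP: "ideal_in A P" using pr unfolding prime_ideal_in_def by blast
  then obtain Pf where Pf: "finite Pf" "Pf \<subseteq> P" "P = lin_comb A Pf"
    using noeth unfolding noetherian_in_def by blast
  have "\<forall>p\<in>Pf. \<exists>k. \<forall>r\<in>ideal_pow ?R k. scale r (scale p y) = 0"
    using Pf(2) Py unfolding H0_def by blast
  then obtain kf where kf: "\<And>p r. p \<in> Pf \<Longrightarrow> r \<in> ideal_pow ?R (kf p) \<Longrightarrow> scale r (scale p y) = 0" by metis
  define K where "K = Suc (sum kf Pf)"
  have kK: "kf p \<le> K" if "p \<in> Pf" for p
    using member_le_sum[of p Pf kf] that Pf(1) unfolding K_def by simp
  define Ms where "Ms = {ts. set ts \<subseteq> T0 \<and> length ts = K}"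
  have finMs: "finite Ms" unfolding Ms_def using finite_lists_length_eq[OF finT] by simp
  define I where "I ts = {a\<in>A. scale a (scale (prod_list ts) y) = 0}" for ts
  have mR: "prod_list ts \<in> ideal_pow ?R K" if "ts \<in> Ms" for ts
  proof -
    have "set ts \<subseteq> ?R" using that unfolding Ms_def RT using ideal_gen_base by blast
    from prod_list_pow[OF this] show ?thesis using that unfolding Ms_def by simp
  qed
  have "P = {a\<in>A. \<forall>i\<in>Ms. a \<in> I i}"
  proof (intro equalityI subsetI)
    fix a assume aP: "a \<in> P"
    have aA: "a \<in> A" using aP idP unfolding ideal_in_def by blast
    obtain c where c: "a = (\<Sum>p\<in>Pf. c p * p)" using aP Pf(3) unfolding lin_comb_def by blast
    have "scale a (scale (prod_list ts) y) = 0" if "ts \<in> Ms" for ts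
    proof -
      have "scale a (scale (prod_list ts) y) = scale (prod_list ts) (scale a y)"
        by (rule scale_left_commute)
      also have "scale a y = (\<Sum>p\<in>Pf. scale (c p) (scale p y))"
        unfolding c scale_sum_left by simp
      also have "scale (prod_list ts) \<dots> = (\<Sum>p\<in>Pf. scale (c p) (scale (prod_list ts) (scale p y)))"
        unfolding scale_sum_right by (simp add: mult_ac)
      also have "\<dots> = 0"
      proof (intro sum.neutral ballI)
        fix p assume "p \<in> Pf"
        then have "prod_list ts \<in> ideal_pow ?R (kf p)"
          using ideal_pow_anti[OF kK] mR[OF that] by blast
        then show "scale (c p) (scale (prod_list ts) (scale p y)) = 0" using kf \<open>p \<in> Pf\<close> by simp
      qed
      finally show ?thesis .
    qed
    then show "a \<in> {a\<in>A. \<forall>i\<in>Ms. a \<in> I i}" using aA unfolding I_def by blast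
  next
    fix a assume a: "a \<in> {a\<in>A. \<forall>i\<in>Ms. a \<in> I i}"
    have "\<forall>r\<in>ideal_pow ?R K. scale r (scale a y) = 0"
    proof
      fix r assume "r \<in> ideal_pow ?R K"
      then have "r \<in> ideal_gen (prod_list ` Ms)" using pow_gen[of T0 K] unfolding RT Ms_def by blast
      then show "scale r (scale a y) = 0"
      proof (rule kill_gen[rotated])
        fix m assume "m \<in> prod_list ` Ms"
        then obtain ts where "ts \<in> Ms" "m = prod_list ts" by blast
        then show "scale m (scale a y) = 0" using a unfolding I_def
          by (simp add: mult.commute)
      qed
    qed
    then show "a \<in> P" using a Py unfolding H0_def by blast
  qed
  moreover have "I i \<subseteq> A \<and> (\<forall>s\<in>A. \<forall>x\<in>I i. s * x \<in> I i)" for i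
    unfolding I_def using AM by (auto simp del: scale_scale) (metis scale_scale scale_zero_right mult.assoc)
  ultimately obtain ts where "ts \<in> Ms" "P = I ts"
    using prime_inter[OF pr finMs _ _ A1 AM, of I] by blast
  then show ?thesis unfolding Ms_def I_def K_def by auto
qed

end


theorem proposition4p4:
  fixes G :: "nat \<Rightarrow> 'a::comm_ring_1 set"
    and smult :: "'a \<Rightarrow> 'm::ab_group_add \<Rightarrow> 'm"
    and X :: "int \<Rightarrow> 'm set"
  assumes "noetherian_in (G 0)"
    and "standard_graded G"
    and "in_starMod_f G smult X"
  shows "ass_quot smult (G 0) UNIV {0}
           = ass_quot smult (G 0) UNIV (H0 G smult) \<union> ass_quot smult (G 0) (H0 G smult) {0}
         \<and> (\<forall>s P. P \<in> ass_quot smult (G 0) (X s) (H0 G smult)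
           \<longrightarrow> (\<exists>r\<ge>1. P \<in> ass_quot smult (G 0) (X (s + r)) {0}))"
proof -
  have gm: "graded_module G smult X" using assms(3) unfolding in_starMod_f_def by blast
  then have md: "module smult" unfolding graded_module_def by blast
  have Xgr: "\<And>m n r x. r \<in> G m \<Longrightarrow> x \<in> X n \<Longrightarrow> smult r x \<in> X (int m + n)"
    using gm unfolding graded_module_def by blast
  have gr: "graded_ring G" and noR: "noetherian_in (UNIV :: 'a set)"
    using assms(2) unfolding standard_graded_def by blast+
  have A1: "1 \<in> G 0" and GM: "\<And>m n x y. x \<in> G m \<Longrightarrow> y \<in> G n \<Longrightarrow> x * y \<in> G (m + n)"
    using gr unfolding graded_ring_def by blast+
  have AM: "\<And>x y. x \<in> G 0 \<Longrightarrow> y \<in> G 0 \<Longrightarrow> x * y \<in> G 0" using GM[of _ 0 _ 0] by simp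
  obtain T0 where T0: "finite T0" "T0 \<subseteq> (\<Union>n\<in>{1..}. G n)"
    and RT: "irrelevant_ideal G = ideal_gen T0"
    using fin_gen_ideal[OF noR, of "\<Union>n\<in>{1..}. G n"] unfolding irrelevant_ideal_def by blast
  have "\<forall>t\<in>T0. \<exists>n. n \<ge> 1 \<and> t \<in> G n" using T0(2) by auto
  then obtain dg where dg: "\<And>t. t \<in> T0 \<Longrightarrow> dg t \<ge> 1 \<and> t \<in> G (dg t)" by metis
  have homog: "set ts \<subseteq> T0 \<Longrightarrow> prod_list ts \<in> G (sum_list (map dg ts)) \<and> sum_list (map dg ts) \<ge> length ts" for ts
  proof (induction ts)
    case Nil then show ?case using A1 by simp
  next
    case (Cons t ts)
    then have "t \<in> G (dg t)" "dg t \<ge> 1" using dg by auto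
    with Cons show ?case using GM by auto
  qed
  have key: "\<exists>ts. set ts \<subseteq> T0 \<and> length ts \<ge> 1 \<and> P = {a\<in>G 0. smult a (smult (prod_list ts) y) = 0}"
    if "prime_ideal_in (G 0) P" "P = {a\<in>G 0. smult a y \<in> H0 G smult}" for P y
    using module.key[OF md A1 AM assms(1) RT T0(1) that] .
  have H00: "0 \<in> H0 G smult" using module.zero_H0[OF md] .
  have sc: "\<And>a b x. smult a (smult b x) = smult (a * b) x" using module.scale_scale[OF md] by blast
  have sz: "\<And>a. smult a 0 = 0" using module.scale_zero_right[OF md] by blast
  have part1a: "ass_quot smult (G 0) UNIV {0} \<subseteq> ass_quot smult (G 0) UNIV (H0 G smult) \<union> ass_quot smult (G 0) (H0 G smult) {0}"
  proof
    fix P assume "P \<in> ass_quot smult (G 0) UNIV {0}"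
    then obtain x where pr: "prime_ideal_in (G 0) P" and Px: "P = {a\<in>G 0. smult a x \<in> {0}}"
      unfolding ass_quot_def by blast
    have prm: "\<forall>a\<in>G 0. \<forall>b\<in>G 0. a * b \<in> P \<longrightarrow> a \<in> P \<or> b \<in> P" using pr unfolding prime_ideal_in_def by blast
    show "P \<in> ass_quot smult (G 0) UNIV (H0 G smult) \<union> ass_quot smult (G 0) (H0 G smult) {0}"
    proof (cases "\<exists>a\<in>G 0. smult a x \<in> H0 G smult \<and> smult a x \<noteq> 0")
      case True
      then obtain a where a: "a \<in> G 0" "smult a x \<in> H0 G smult" "smult a x \<noteq> 0" by blast
      have "P = {b\<in>G 0. smult b (smult a x) \<in> {0}}"
      proof (intro equalityI subsetI)
        fix b assume "b \<in> P"
        then have "b \<in> G 0" "smult b x = 0" using Px by auto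
        then show "b \<in> {b\<in>G 0. smult b (smult a x) \<in> {0}}"
          using sc[of a b x] sc[of b a x] sz by (simp add: mult.commute)
      next
        fix b assume "b \<in> {b\<in>G 0. smult b (smult a x) \<in> {0}}"
        then have "b \<in> G 0" "b * a \<in> P" using Px sc AM a(1) by auto
        moreover have "a \<notin> P" using Px a by auto
        ultimately show "b \<in> P" using prm a(1) by blast
      qed
      then show ?thesis using pr a unfolding ass_quot_def by blast
    next
      case False
      then have "P = {a\<in>G 0. smult a x \<in> H0 G smult}" using Px H00 by auto
      then show ?thesis using pr unfolding ass_quot_def by blast
    qed
  qed
  have part1b: "ass_quot smult (G 0) UNIV (H0 G smult) \<subseteq> ass_quot smult (G 0) UNIV {0}"
  proof
    fix P assume "P \<in> ass_quot smult (G 0) UNIV (H0 G smult)"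
    then obtain y where pr: "prime_ideal_in (G 0) P" and Py: "P = {a\<in>G 0. smult a y \<in> H0 G smult}"
      unfolding ass_quot_def by blast
    from key[OF pr Py] obtain ts where "P = {a\<in>G 0. smult a (smult (prod_list ts) y) = 0}" by blast
    then show "P \<in> ass_quot smult (G 0) UNIV {0}" using pr unfolding ass_quot_def by auto
  qed
  have part1c: "ass_quot smult (G 0) (H0 G smult) {0} \<subseteq> ass_quot smult (G 0) UNIV {0}"
    unfolding ass_quot_def by blast
  have part2: "\<exists>r\<ge>1. P \<in> ass_quot smult (G 0) (X (s + r)) {0}"
    if hP: "P \<in> ass_quot smult (G 0) (X s) (H0 G smult)" for s P
  proof -
    obtain y where y: "y \<in> X s" and pr: "prime_ideal_in (G 0) P" and Py: "P = {a\<in>G 0. smult a y \<in> H0 G smult}"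
      using hP unfolding ass_quot_def by blast
    from key[OF pr Py] obtain ts where ts: "set ts \<subseteq> T0" "length ts \<ge> 1"
      and P: "P = {a\<in>G 0. smult a (smult (prod_list ts) y) = 0}" by blast
    define d where "d = sum_list (map dg ts)"
    have "prod_list ts \<in> G d" "d \<ge> 1" using homog[OF ts(1)] ts(2) unfolding d_def by auto
    then have "smult (prod_list ts) y \<in> X (s + int d)" using Xgr[OF _ y] by (simp add: add.commute)
    then have "P \<in> ass_quot smult (G 0) (X (s + int d)) {0}" using pr P unfolding ass_quot_def by auto
    then show ?thesis using \<open>d \<ge> 1\<close> by (intro exI[of _ "int d"]) auto
  qed
  show ?thesis using part1a part1b part1c part2 by blast
qed

end
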